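(* Let $N\ge 2$ and let $p(z)=\sum_{k=0}^{N-1}\alpha_kz^k$ be a nonconstant complex polynomial. Let $f_n$ ($n=0,\ldots,N-1$) and $f_n'$ ($n=0,\ldots,N-1$) be as defined below, and set $$k:=\max\{n: f_n\neq 0\},\qquad k':=\max\{n: f_n'\neq0\},\qquad m:=-\frac{k}{2}+\sqrt{\frac{f_k'}{f_k}+\frac{k^2}{4}}.$$ Then $k\ge k'$, $m\in\mathbb{N}_0=\{0,1,2,\ldots\}$ (in particular $f_k'/f_k$ is a nonnegative real number), and $$\alpha_j=0 \text{ for } j<m,\qquad \alpha_m\neq0,\quad \alpha_{m+k}\neq 0,\qquad \alpha_j=0\text{ for } j>m+k.$$ In particular, $\deg(p)=m+k$.
   Context: $\omega_m:=e^{2\pi i/m}$. For $n=0,\ldots,N-1$, $f_n:=\frac{1}{2N-1}\sum_{j=0}^{2N-2}|p(\omega_{2N-1}^j)|^2\exp\big(-\frac{2\pi i jn}{2N-1}\big)$. For $n=0,\ldots,N-2$, $f_n':=\frac{1}{2N-3}\sum_{j=0}^{2N-4}|p'(\omega_{2N-3}^j)|^2\exp\big(-\frac{2\pi i jn}{2N-3}\big)$, and $f_{N-1}':=0$. *)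

theory Defs
  imports "HOL-Analysis.Analysis" "HOL-Computational_Algebra.Polynomial"
begin

definition omega :: "nat \<Rightarrow> complex" where
  "omega m = exp (2 * pi * \<i> / of_nat m)"

definition fcoef :: "nat \<Rightarrow> complex poly \<Rightarrow> nat \<Rightarrow> complex" where
  "fcoef N p n = (if n < N then
     (1 / of_nat (2*N-1)) * (\<Sum>j = 0..2*N-2.
        complex_of_real ((cmod (poly p (omega (2*N-1) ^ j)))\<^sup>2)
        * exp (- (2 * pi * \<i> * of_nat j * of_nat n / of_nat (2*N-1))))
   else 0)"

text \<open>f'_n for n = 0..N-2 built from the derivative p'; f'_{N-1} = 0 (and 0 beyond)\<close>
definition fcoef' :: "nat \<Rightarrow> complex poly \<Rightarrow> nat \<Rightarrow> complex" where
  "fcoef' N p n = (if n + 2 \<le> N then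
     (1 / of_nat (2*N-3)) * (\<Sum>j = 0..2*N-4.
        complex_of_real ((cmod (poly (pderiv p) (omega (2*N-3) ^ j)))\<^sup>2)
        * exp (- (2 * pi * \<i> * of_nat j * of_nat n / of_nat (2*N-3))))
   else 0)"

end

theory Submission
  imports Defs
begin

lemma omega_pow_eq_1:
  assumes "L > 0" "0 < s" "s < L"
  shows "omega L ^ s \<noteq> 1"
proof
  assume h: "omega L ^ s = 1"
  have "omega L ^ s = exp (of_nat s * (2 * pi * \<i> / of_nat L))"
    by (simp only: omega_def exp_of_nat_mult)
  also have "\<dots> = exp (\<i> * complex_of_real (2 * pi * s / L))" by (simp add: field_simps)
  finally have "exp (\<i> * complex_of_real (2 * pi * s / L)) = 1" using h by simp
  then obtain n :: int where n: "2 * pi * s / L = of_int (2*n) * pi" by (auto simp: exp_eq_1)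
  hence "real s = of_int n * real L" using assms by (simp add: field_simps)
  hence "int s = n * int L" by (metis of_int_eq_iff of_int_mult of_int_of_nat_eq)
  hence "n * int L > 0" using assms by simp
  hence "n > 0" by (simp add: zero_less_mult_iff)
  hence "n * int L \<ge> 1 * int L" by (intro mult_right_mono) auto
  with \<open>int s = n * int L\<close> assms show False by linarith
qed

lemma omega_pow_L: "L > 0 \<Longrightarrow> omega L ^ L = 1"
proof -
  assume "L > 0"
  have "omega L ^ L = exp (of_nat L * (2 * pi * \<i> / of_nat L))"
    by (simp only: omega_def exp_of_nat_mult)
  also have "\<dots> = exp (2 * pi * \<i>)" using \<open>L>0\<close> by simp
  finally show ?thesis by simp
qed

lemma omega_nz: "omega L \<noteq> 0" by (simp add: omega_def)

lemma cnj_omega: "cnj (omega L) = inverse (omega L)"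
  by (simp add: omega_def exp_cnj exp_minus[symmetric])

lemma geo:
  assumes "L > 0" "a < L" "c < L"
  shows "(\<Sum>j<L. (omega L ^ a * inverse (omega L) ^ c) ^ j) = (if a = c then of_nat L else 0)"
proof (cases "a = c")
  case True
  have "omega L ^ c * inverse (omega L) ^ c = 1"
    using omega_nz by (simp add: power_inverse)
  thus ?thesis using True by simp
next
  case False
  let ?w = "omega L"
  let ?x = "?w ^ a * inverse ?w ^ c"
  have "?x \<noteq> 1"
  proof
    assume x1: "?x = 1"
    show False
    proof (cases "a < c")
      case True
      have "?w ^ c = ?w ^ a * ?w ^ (c - a)" using True by (simp add: power_add[symmetric])
      have "?x * ?w ^ c = ?w ^ a" using omega_nz
        by (simp add: power_inverse mult.assoc)
      hence "?w ^ c = ?w ^ a" using x1 by simp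
      hence "?w ^ a * ?w ^ (c - a) = ?w ^ a * 1" using True by (simp add: power_add[symmetric])
      hence "?w ^ (c - a) = 1" using omega_nz by simp
      thus False using omega_pow_eq_1[of L "c-a"] True assms by simp
    next
      case F: False
      hence lt: "c < a" using False by simp
      have "?x * ?w ^ c = ?w ^ a" using omega_nz
        by (simp add: power_inverse mult.assoc)
      hence "?w ^ c = ?w ^ a" using x1 by simp
      moreover have "?w ^ a = ?w ^ c * ?w ^ (a - c)" using lt by (simp add: power_add[symmetric])
      ultimately have "?w ^ c * ?w ^ (a - c) = ?w ^ c * 1" by simp
      hence "?w ^ (a - c) = 1" using omega_nz by simp
      thus False using omega_pow_eq_1[of L "a-c"] lt assms by simp
    qed
  qed
  moreover have "?x ^ L = 1"
  proof -
    have "?x ^ L = (?w ^ L) ^ a * inverse (?w ^ L) ^ c"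
      by (simp add: power_mult_distrib power_mult[symmetric] mult.commute power_inverse)
    thus ?thesis using omega_pow_L assms by simp
  qed
  ultimately show ?thesis using False by (simp add: sum_gp_strict)
qed

lemma poly_lt:
  fixes q :: "complex poly"
  assumes "degree q < M"
  shows "poly q x = (\<Sum>a<M. coeff q a * x ^ a)"
proof -
  have "poly q x = (\<Sum>a\<le>degree q. coeff q a * x ^ a)" by (rule poly_altdef)
  also have "\<dots> = (\<Sum>a<M. coeff q a * x ^ a)"
    by (rule sum.mono_neutral_left) (use assms in \<open>auto simp: coeff_eq_0\<close>)
  finally show ?thesis .
qed

lemma dft:
  fixes q :: "complex poly"
  assumes M1: "M \<ge> 1" and dq: "degree q < M" and nM: "n < M"
  shows "(1 / of_nat (2*M-1)) * (\<Sum>j = 0..2*M-2. complex_of_real ((cmod (poly q (omega (2*M-1) ^ j)))\<^sup>2)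
        * exp (- (2 * pi * \<i> * of_nat j * of_nat n / of_nat (2*M-1))))
    = (\<Sum>i<M. coeff q (i+n) * cnj (coeff q i))"
proof -
  define L where "L = 2*M-1"
  define w where "w = omega L"
  have L0: "L > 0" using M1 by (simp add: L_def)
  have iv: "{0..2*M-2} = {..<L}" using M1 by (auto simp: L_def)
  have iw: "inverse w = exp (- (2 * pi * \<i> / of_nat L))"
    by (simp add: w_def omega_def exp_minus)
  have E: "exp (- (2 * pi * \<i> * of_nat j * of_nat n / of_nat L)) = inverse w ^ (j*n)" for j
  proof -
    have "inverse w ^ (j*n) = exp (of_nat (j*n) * (- (2 * pi * \<i> / of_nat L)))"
      by (simp only: iw exp_of_nat_mult)
    also have "\<dots> = exp (- (2 * pi * \<i> * of_nat j * of_nat n / of_nat L))"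
      by (simp add: field_simps)
    finally show ?thesis by simp
  qed
  have cw: "cnj w = inverse w" by (simp add: w_def cnj_omega)
  have T: "complex_of_real ((cmod (poly q (w ^ j)))\<^sup>2) * exp (- (2 * pi * \<i> * of_nat j * of_nat n / of_nat L))
     = (\<Sum>a<M. \<Sum>b<M. coeff q a * cnj (coeff q b) * (w ^ a * inverse w ^ (b + n)) ^ j)" for j
  proof -
    have "complex_of_real ((cmod (poly q (w ^ j)))\<^sup>2) = poly q (w^j) * cnj (poly q (w^j))"
      by (rule complex_norm_square)
    also have "\<dots> = (\<Sum>a<M. coeff q a * (w ^ j) ^ a) * (\<Sum>b<M. cnj (coeff q b) * (inverse w ^ j) ^ b)"
      by (simp add: poly_lt[OF dq] cw power_inverse)
    finally have 1: "complex_of_real ((cmod (poly q (w ^ j)))\<^sup>2) = \<dots>" .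
    show ?thesis unfolding 1 E
      by (simp add: sum_product sum_distrib_left sum_distrib_right power_mult_distrib power_add
          power_mult[symmetric] ac_simps)
         (rule sum.swap)
  qed
  have "(\<Sum>j = 0..2*M-2. complex_of_real ((cmod (poly q (omega (2*M-1) ^ j)))\<^sup>2)
        * exp (- (2 * pi * \<i> * of_nat j * of_nat n / of_nat (2*M-1))))
     = (\<Sum>j<L. \<Sum>a<M. \<Sum>b<M. coeff q a * cnj (coeff q b) * (w ^ a * inverse w ^ (b + n)) ^ j)"
    unfolding iv L_def[symmetric] w_def[symmetric] by (rule sum.cong[OF refl T])
  also have "\<dots> = (\<Sum>a<M. \<Sum>b<M. coeff q a * cnj (coeff q b) * (\<Sum>j<L. (w ^ a * inverse w ^ (b + n)) ^ j))"
    by (simp add: sum.swap[of _ "{..<L}"] sum_distrib_left)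
  also have "\<dots> = (\<Sum>a<M. \<Sum>b<M. coeff q a * cnj (coeff q b) * (if a = b + n then of_nat L else 0))"
  proof (intro sum.cong refl)
    fix a b assume "a \<in> {..<M}" "b \<in> {..<M}"
    hence "a < L" "b + n < L" using nM by (auto simp: L_def)
    thus "coeff q a * cnj (coeff q b) * (\<Sum>j<L. (w ^ a * inverse w ^ (b + n)) ^ j) =
          coeff q a * cnj (coeff q b) * (if a = b + n then of_nat L else 0)"
      unfolding w_def using geo[OF L0] by simp
  qed
  also have "\<dots> = (\<Sum>b<M. \<Sum>a<M. if a = b + n then coeff q (b+n) * cnj (coeff q b) * of_nat L else 0)"
    by (subst sum.swap) (auto intro!: sum.cong)
  also have "\<dots> = (\<Sum>b<M. coeff q (b+n) * cnj (coeff q b) * of_nat L)"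
    by (intro sum.cong refl) (use dq in \<open>auto simp: coeff_eq_0\<close>)
  finally have "(\<Sum>j = 0..2*M-2. complex_of_real ((cmod (poly q (omega (2*M-1) ^ j)))\<^sup>2)
        * exp (- (2 * pi * \<i> * of_nat j * of_nat n / of_nat (2*M-1))))
     = (\<Sum>b<M. coeff q (b+n) * cnj (coeff q b)) * of_nat L"
    by (simp add: sum_distrib_right)
  moreover have Lnz: "(of_nat L :: complex) \<noteq> 0" using L0 by simp
  ultimately show ?thesis unfolding L_def[symmetric] by simp
qed

theorem lemma3p3:
  fixes N :: nat and p :: "complex poly"
  assumes "N \<ge> 2" and "degree p \<le> N - 1" and "degree p \<ge> 1"
  defines "k \<equiv> Max {n. n < N \<and> fcoef N p n \<noteq> 0}"
      and "k' \<equiv> Max {n. n < N \<and> fcoef' N p n \<noteq> 0}"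
  shows "k \<ge> k' \<and>
    fcoef' N p k / fcoef N p k \<in> \<real> \<and> Re (fcoef' N p k / fcoef N p k) \<ge> 0 \<and>
    (\<exists>m::nat. of_nat m = - of_nat k / 2 + csqrt (fcoef' N p k / fcoef N p k + (of_nat k)\<^sup>2 / 4)
      \<and> (\<forall>j<m. coeff p j = 0) \<and> coeff p m \<noteq> 0 \<and> coeff p (m + k) \<noteq> 0
      \<and> (\<forall>j>m + k. coeff p j = 0) \<and> degree p = m + k)"
proof -
  note N2 = assms(1) and dN = assms(2) and d1 = assms(3)
  define c where "c n = (\<Sum>i<N. coeff p (i+n) * cnj (coeff p i))" for n
  define c' where "c' n = (\<Sum>i<N-1. coeff (pderiv p) (i+n) * cnj (coeff (pderiv p) i))" for n
  define d where "d = degree p"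
  have dltN: "d < N" using dN N2 by (simp add: d_def)
  have F: "fcoef N p n = c n" if "n < N" for n
    using dft[of N p n] that N2 dltN unfolding fcoef_def c_def d_def by simp
  have dpd: "degree (pderiv p) = d - 1" by (simp add: d_def degree_pderiv)
  have F': "fcoef' N p n = c' n" if "n + 2 \<le> N" for n
  proof -
    have e1: "2*(N-1)-1 = 2*N-3" "2*(N-1)-2 = 2*N-4" by auto
    have "degree (pderiv p) < N - 1" using dpd dltN d1 d_def by simp
    from dft[of "N-1" "pderiv p" n, OF _ this] that N2
    show ?thesis unfolding fcoef'_def c'_def e1 using that by simp
  qed
  have pnz: "p \<noteq> 0" using d1 by auto
  have cd: "coeff p d \<noteq> 0" using pnz by (simp add: d_def)
  define m where "m = (LEAST i. coeff p i \<noteq> 0)"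
  have cm: "coeff p m \<noteq> 0" unfolding m_def by (rule LeastI[of _ d]) (rule cd)
  have below: "coeff p j = 0" if "j < m" for j using that not_less_Least unfolding m_def by blast
  have md: "m \<le> d" unfolding m_def by (rule Least_le) (rule cd)
  have rng: "m \<le> j \<and> j \<le> d" if "coeff p j \<noteq> 0" for j
    using that below le_degree[of p j] d_def by (meson not_le)
  have c_hi: "c n = 0" if "n > d - m" for n
    unfolding c_def
  proof (rule sum.neutral, intro ballI)
    fix i assume "i \<in> {..<N}"
    show "coeff p (i + n) * cnj (coeff p i) = 0"
    proof (cases "coeff p i = 0")
      case False
      hence "i + n > d" using rng[of i] that md by linarith
      hence "coeff p (i+n) = 0" using rng by force
      thus ?thesis by simp
    qed simp
  qed
  have c_k: "c (d - m) = coeff p d * cnj (coeff p m)"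
  proof -
    have "c (d - m) = (\<Sum>i<N. if i = m then coeff p d * cnj (coeff p m) else 0)"
      unfolding c_def
    proof (intro sum.cong refl)
      fix i assume "i \<in> {..<N}"
      show "coeff p (i + (d - m)) * cnj (coeff p i) = (if i = m then coeff p d * cnj (coeff p m) else 0)"
      proof (cases "i = m")
        case True thus ?thesis using md by simp
      next
        case False
        show ?thesis
        proof (cases "coeff p i = 0")
          case F2: False
          hence "i > m" using rng[of i] False by simp
          hence "coeff p (i + (d - m)) = 0" using rng[of "i + (d - m)"] md by linarith
          thus ?thesis using False by simp
        qed (use False in simp)
      qed
    qed
    also have "\<dots> = coeff p d * cnj (coeff p m)" using md dltN by simp
    finally show ?thesis .
  qed
  have hk: "k = d - m" unfolding k_def
  proof (rule Max_eqI)
    show "finite {n. n < N \<and> fcoef N p n \<noteq> 0}" by simp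
    show "y \<le> d - m" if "y \<in> {n. n < N \<and> fcoef N p n \<noteq> 0}" for y
      using that F c_hi by (metis (mono_tags, lifting) mem_Collect_eq not_le)
    show "d - m \<in> {n. n < N \<and> fcoef N p n \<noteq> 0}"
      using F[of "d-m"] c_k cd cm dltN by simp
  qed
  have cpd: "coeff (pderiv p) i = of_nat (Suc i) * coeff p (Suc i)" for i by (rule coeff_pderiv)
  have c'_hi: "c' n = 0" if "n > d - m" for n
    unfolding c'_def
  proof (rule sum.neutral, intro ballI)
    fix i assume "i \<in> {..<N-1}"
    show "coeff (pderiv p) (i + n) * cnj (coeff (pderiv p) i) = 0"
    proof (cases "coeff p (Suc i) = 0")
      case False
      hence "Suc i + n > d" using rng[of "Suc i"] that md by linarith
      hence "coeff p (Suc (i+n)) = 0" using rng by force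
      thus ?thesis by (simp add: cpd)
    qed (simp add: cpd)
  qed
  have c'0: "c' 0 \<noteq> 0"
  proof -
    have A: "c' 0 = complex_of_real (\<Sum>i<N-1. (cmod (coeff (pderiv p) i))\<^sup>2)"
      unfolding c'_def of_real_sum complex_norm_square by simp
    moreover have B: "(\<Sum>i<N-1. (cmod (coeff (pderiv p) i))\<^sup>2) > 0"
    proof (rule sum_pos2)
      show "d - 1 \<in> {..<N-1}" using dltN d1 d_def by auto
      show "0 < (cmod (coeff (pderiv p) (d-1)))\<^sup>2" using cd d1 d_def by (simp add: cpd)
    qed auto
    ultimately show ?thesis by (metis of_real_eq_0_iff order_less_irrefl)
  qed
  have hk': "k' \<le> k" unfolding k'_def hk
  proof (rule Max.boundedI)
    show "finite {n. n < N \<and> fcoef' N p n \<noteq> 0}" by simp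
    show "{n. n < N \<and> fcoef' N p n \<noteq> 0} \<noteq> {}"
      using F'[of 0] c'0 N2 by (auto intro!: exI[of _ 0])
    show "a \<le> d - m" if "a \<in> {n. n < N \<and> fcoef' N p n \<noteq> 0}" for a
    proof (rule ccontr)
      assume "\<not> a \<le> d - m"
      hence "c' a = 0" using c'_hi by simp
      moreover have "fcoef' N p a = (if a + 2 \<le> N then c' a else 0)" using F' by (simp add: fcoef'_def)
      ultimately show False using that by (simp split: if_splits)
    qed
  qed
  have c'_k: "c' (d - m) = of_nat (m * d) * c (d - m)"
  proof -
    have "c' (d - m) = (\<Sum>i<N-1. if Suc i = m then of_nat (m * d) * (coeff p d * cnj (coeff p m)) else 0)"
      unfolding c'_def
    proof (intro sum.cong refl)
      fix i assume "i \<in> {..<N-1}"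
      show "coeff (pderiv p) (i + (d - m)) * cnj (coeff (pderiv p) i) =
        (if Suc i = m then of_nat (m * d) * (coeff p d * cnj (coeff p m)) else 0)"
      proof (cases "Suc i = m")
        case True
        hence e: "Suc (i + (d - m)) = d" using md by simp
        have A: "coeff (pderiv p) (i + (d - m)) = of_nat d * coeff p d"
          using cpd[of "i + (d - m)"] by (simp only: e)
        have B: "coeff (pderiv p) i = of_nat m * coeff p m"
          using cpd[of i] by (simp only: True)
        show ?thesis unfolding A B using True by simp
      next
        case False
        show ?thesis
        proof (cases "coeff p (Suc i) = 0")
          case F2: False
          hence "Suc i > m" using rng[of "Suc i"] False by simp
          hence "coeff p (Suc (i + (d - m))) = 0" using rng[of "Suc (i + (d - m))"] md by linarith
          thus ?thesis using False by (simp add: cpd)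
        qed (use False in \<open>simp add: cpd\<close>)
      qed
    qed
    also have "\<dots> = of_nat (m * d) * (coeff p d * cnj (coeff p m))"
    proof (cases m)
      case 0 thus ?thesis by simp
    next
      case (Suc m0)
      hence "m0 \<in> {..<N-1}" using md dltN by simp
      thus ?thesis using Suc by simp
    qed
    finally show ?thesis using c_k by simp
  qed
  have fk0: "fcoef N p k \<noteq> 0" using F[of k] hk c_k cd cm dltN by simp
  have FK: "fcoef' N p k = of_nat (m * (m + k)) * fcoef N p k"
  proof (cases m)
    case 0
    have "fcoef' N p k = (if k + 2 \<le> N then c' k else 0)" using F' by (simp add: fcoef'_def)
    thus ?thesis using 0 c'_k hk by simp
  next
    case (Suc m0)
    hence "k + 2 \<le> N" using hk dltN md by linarith
    thus ?thesis using F' F c'_k hk md dltN by (simp add: mult.commute)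
  qed
  have R: "fcoef' N p k / fcoef N p k = of_nat (m * (m + k))" using FK fk0 by simp
  define w :: complex where "w = of_nat m + of_nat k / 2"
  have "w\<^sup>2 = of_nat (m * (m + k)) + (of_nat k)\<^sup>2 / 4"
    unfolding w_def by (simp add: power2_eq_square field_simps)
  moreover have "0 < Re w \<or> Re w = 0 \<and> 0 \<le> Im w"
    unfolding w_def by (cases "m + k = 0") auto
  ultimately have sq: "csqrt (of_nat (m * (m + k)) + (of_nat k)\<^sup>2 / 4) = w"
    by (intro csqrt_unique) auto
  have dmk: "d = m + k" using hk md by simp
  show ?thesis
  proof (intro conjI exI[of _ m])
    show "k' \<le> k" by (rule hk')
    show "fcoef' N p k / fcoef N p k \<in> \<real>" unfolding R by simp
    show "Re (fcoef' N p k / fcoef N p k) \<ge> 0" unfolding R by simp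
    show "of_nat m = - of_nat k / 2 + csqrt (fcoef' N p k / fcoef N p k + (of_nat k)\<^sup>2 / 4)"
      unfolding R sq w_def by simp
    show "\<forall>j<m. coeff p j = 0" using below by simp
    show "coeff p m \<noteq> 0" by (rule cm)
    show "coeff p (m + k) \<noteq> 0" using cd dmk by simp
    show "\<forall>j>m + k. coeff p j = 0" using dmk d_def by (auto intro: coeff_eq_0)
    show "degree p = m + k" using dmk d_def by simp
  qed
qed

end
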